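(* For $\beta\in\{1,4\}$ write the large-$N$ expansion of the bulk-scaled structure function as $\tilde S_{N,\beta}(\tau)\sim \tilde S_{0,\infty,\beta}(\tau)+N^{-2}\tilde S_{1,\infty,\beta}(\tau)+N^{-4}\tilde S_{2,\infty,\beta}(\tau)+\cdots$. Then for all $\tau>0$ with $\tau\ne1$ (and additionally $\tau\ne2$ when $\beta=4$), $$\tilde S_{1,\infty,\beta}(\tau)=c_\beta\,\tau^2\frac{d^2}{d\tau^2}\tilde S_{0,\infty,\beta}(\tau),$$ $$\tilde S_{2,\infty,\beta}(\tau)=d_\beta\Big(\tau^4\frac{d^4}{d\tau^4}\tilde S_{0,\infty,\beta}(\tau)+8\tau^3\frac{d^3}{d\tau^3}\tilde S_{0,\infty,\beta}(\tau)+12\tau^2\frac{d^2}{d\tau^2}\tilde S_{0,\infty,\beta}(\tau)\Big),$$ with $c_1=-\frac16$, $c_4=-\frac1{24}$, $d_1=\frac7{360}$, $d_4=\frac7{5760}$.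
   Context: $\psi$ is the digamma function. The bulk-scaled structure functions are defined for real $\tau$ and $N>0$ by: $\tilde S_{N,1}(\tau)=2|\tau|-|\tau|\big(\psi(|\tau|N+\tfrac{N+1}2)-\psi(\tfrac{N+1}2)\big)$ for $|\tau|<1$, $\tilde S_{N,1}(\tau)=2-|\tau|\big(\psi(|\tau|N+\tfrac{N+1}2)-\psi(|\tau|N+\tfrac{1-N}2)\big)$ for $|\tau|\ge1$; $\tilde S_{N,4}(\tau)=\frac{|\tau|}2\big(1+\frac12(\psi(N+\frac12)-\psi(N-|\tau|N+\frac12))\big)$ for $|\tau|<1$, $\tilde S_{N,4}(\tau)=\frac{|\tau|}2\big(1+\frac12(\psi(N+\frac12)-\psi(-N+|\tau|N+\frac12))\big)$ for $1<|\tau|<2-1/N$, $\tilde S_{N,4}(\tau)=1$ for $|\tau|\ge2-1/N$. These are $\frac{2\pi}NS_{N,\beta}(\tau N)$ for the structure function $S_{N,\beta}$ of the circular $\beta$ ensemble. The expansion coefficients $\tilde S_{l,\infty,\beta}$ are defined by the large-$N$ asymptotic expansion at fixed $\tau$, which contains only even powers of $1/N$. *)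

theory Defs
  imports "HOL-Analysis.Analysis"
begin

definition S1N :: "real \<Rightarrow> real \<Rightarrow> real" where
  "S1N N \<tau> =
    (if \<bar>\<tau>\<bar> < 1
     then 2 * \<bar>\<tau>\<bar> - \<bar>\<tau>\<bar> * (Digamma (\<bar>\<tau>\<bar> * N + (N + 1) / 2) - Digamma ((N + 1) / 2))
     else 2 - \<bar>\<tau>\<bar> * (Digamma (\<bar>\<tau>\<bar> * N + (N + 1) / 2) - Digamma (\<bar>\<tau>\<bar> * N + (1 - N) / 2)))"

text \<open>Bulk-scaled structure function for beta = 4. At |tau| = 1 (not covered by the
  paper's case split) we use the formula of the middle range; this value is irrelevant
  to the theorem, where tau = 1 is excluded.\<close>
definition S4N :: "real \<Rightarrow> real \<Rightarrow> real" where
  "S4N N \<tau> =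
    (if \<bar>\<tau>\<bar> < 1
     then \<bar>\<tau>\<bar> / 2 * (1 + (Digamma (N + 1/2) - Digamma (N - \<bar>\<tau>\<bar> * N + 1/2)) / 2)
     else if \<bar>\<tau>\<bar> < 2 - 1 / N
     then \<bar>\<tau>\<bar> / 2 * (1 + (Digamma (N + 1/2) - Digamma (- N + \<bar>\<tau>\<bar> * N + 1/2)) / 2)
     else 1)"

definition SN :: "nat \<Rightarrow> real \<Rightarrow> real \<Rightarrow> real" where
  "SN \<beta> N \<tau> = (if \<beta> = 1 then S1N N \<tau> else S4N N \<tau>)"

definition S0inf :: "nat \<Rightarrow> real \<Rightarrow> real" where
  "S0inf \<beta> \<tau> = Lim at_top (\<lambda>N. SN \<beta> N \<tau>)"

definition S1inf :: "nat \<Rightarrow> real \<Rightarrow> real" where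
  "S1inf \<beta> \<tau> = Lim at_top (\<lambda>N. N^2 * (SN \<beta> N \<tau> - S0inf \<beta> \<tau>))"

definition S2inf :: "nat \<Rightarrow> real \<Rightarrow> real" where
  "S2inf \<beta> \<tau> = Lim at_top (\<lambda>N. N^4 * (SN \<beta> N \<tau> - S0inf \<beta> \<tau> - S1inf \<beta> \<tau> / N^2))"

definition cbeta :: "nat \<Rightarrow> real" where
  "cbeta \<beta> = (if \<beta> = 1 then - 1/6 else - 1/24)"

definition dbeta :: "nat \<Rightarrow> real" where
  "dbeta \<beta> = (if \<beta> = 1 then 7/360 else 7/5760)"

end

theory Submission
  imports Defs "HOL-Real_Asymp.Real_Asymp"
begin


definition gg :: "real \<Rightarrow> real" where
  "gg z = Digamma (z + 1/2) - ln z - 1/(24*z^2) + 7/(960*z^4)"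
definition hh :: "real \<Rightarrow> real" where
  "hh z = - 1/(z+1/2) + ln (z+1) - ln z - 1/(24*z^2) + 1/(24*(z+1)^2) + 7/(960*z^4) - 7/(960*(z+1)^4)"

lemma gg_step: assumes z: "z > 0" shows "gg z - gg (z+1) = hh z"
proof -
  have "Digamma (z + 1/2 + 1) = Digamma (z+1/2) + 1/(z+1/2)"
    using Digamma_plus1[of "z+1/2"] z by simp
  moreover have "z + 1 + 1/2 = z + 1/2 + 1" by simp
  ultimately have "Digamma (z + 1 + 1/2) = Digamma (z+1/2) + 1/(z+1/2)" by simp
  then show ?thesis unfolding gg_def hh_def by simp
qed

lemma gg_tele: assumes z: "z > 0" shows "gg z - gg (z + real n) = (\<Sum>k<n. hh (z + real k))"
proof (induction n)
  case 0 then show ?case by simp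
next
  case (Suc n)
  have "gg (z + real n) - gg (z + real n + 1) = hh (z + real n)"
    using z by (intro gg_step) simp
  with Suc show ?case by (simp add: add_ac)
qed

lemma sum_sq_bound: "(\<Sum>k<n. 1/(real k+1)^2) \<le> 2 - 2/(real n+1)"
proof (induction n)
  case 0 then show ?case by simp
next
  case (Suc n)
  have "1/(real n+1)^2 \<le> 2/(real n+1) - 2/(real n+2)"
    by (simp add: divide_simps power2_eq_square algebra_simps)
  with Suc show ?case by (simp add: add_ac)
qed

lemma harm_upper: assumes w: "w > 0" shows "ln (w + real m) - ln w \<le> (\<Sum>k<m. 1/(w + real k))"
proof (induction m)
  case 0 then show ?case by simp
next
  case (Suc m)
  have "ln (w + real m + 1) - ln (w + real m) \<le> ((w + real m + 1) - (w + real m)) / (w + real m)"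
    using w by (intro ln_diff_le) auto
  with Suc show ?case by (simp add: add_ac)
qed

lemma harm_lower: assumes w: "w > 0"
  shows "(\<Sum>k<Suc m. 1/(w + real k)) \<le> 1/w + ln (w + real m) - ln w"
proof (induction m)
  case 0 then show ?case by simp
next
  case (Suc m)
  have "ln (w + real m) - ln (w + real m + 1) \<le> ((w + real m) - (w + real m + 1)) / (w + real m + 1)"
    using w by (intro ln_diff_le) auto
  hence "1/(w + real (Suc m)) \<le> ln (w + real (Suc m)) - ln (w + real m)"
    by (simp add: add_ac)
  with Suc show ?case by (simp add: add_ac)
qed

lemma Digamma_seq: assumes w: "(w::real) > 0"
  shows "(\<lambda>m. ln (real m) - (\<Sum>n<m. 1/(w + real n))) \<longlonglongrightarrow> Digamma w"
  using Digamma_LIMSEQ[of w] w by (simp add: inverse_eq_divide)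

lemma Digamma_le_ln: assumes w: "(w::real) > 0" shows "Digamma w \<le> ln w"
proof (rule tendsto_le[OF _ _ Digamma_seq[OF w]])
  show "sequentially \<noteq> bot" by simp
  show "(\<lambda>m. ln (real m) - ln (w + real m) + ln w) \<longlonglongrightarrow> ln w"
    using w by real_asymp
  show "\<forall>\<^sub>F m in sequentially. ln (real m) - (\<Sum>n<m. 1/(w + real n)) \<le> ln (real m) - ln (w + real m) + ln w"
    using harm_upper[OF w] by (intro always_eventually) (smt (verit))
qed

lemma Digamma_ge_ln: assumes w: "(w::real) > 0" shows "ln w - 1/w \<le> Digamma w"
proof (rule tendsto_le[OF _ LIMSEQ_Suc[OF Digamma_seq[OF w]]])
  show "sequentially \<noteq> bot" by simp
  show "(\<lambda>m. ln (real (Suc m)) - 1/w - ln (w + real m) + ln w) \<longlonglongrightarrow> ln w - 1/w"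
    using w by real_asymp
  show "\<forall>\<^sub>F m in sequentially. ln (real (Suc m)) - 1/w - ln (w + real m) + ln w \<le> ln (real (Suc m)) - (\<Sum>n<Suc m. 1/(w + real n))"
    using harm_lower[OF w] by (intro always_eventually) (smt (verit))
qed

lemma Digamma_ln_lim: "((\<lambda>w::real. Digamma w - ln w) \<longlongrightarrow> 0) at_top"
proof (rule tendsto_sandwich[of "\<lambda>w. - 1/w" _ _ "\<lambda>w. 0"])
  show "\<forall>\<^sub>F w in at_top. - 1/(w::real) \<le> Digamma w - ln w"
    by (rule eventually_mono[OF eventually_gt_at_top[of "0::real"]]) (use Digamma_ge_ln in force)
  show "\<forall>\<^sub>F w in at_top. Digamma (w::real) - ln w \<le> 0"
    by (rule eventually_mono[OF eventually_gt_at_top[of "0::real"]]) (use Digamma_le_ln in force)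
  show "((\<lambda>w::real. - 1/w) \<longlongrightarrow> 0) at_top" by real_asymp
qed simp

lemma gg_lim: "(gg \<longlongrightarrow> 0) at_top"
proof -
  have f: "filterlim (\<lambda>z::real. z + 1/2) at_top at_top" by real_asymp
  have 1: "((\<lambda>z::real. Digamma (z + 1/2) - ln (z + 1/2)) \<longlongrightarrow> 0) at_top"
    using filterlim_compose[OF Digamma_ln_lim f] by simp
  have 2: "((\<lambda>z::real. ln (z + 1/2) - ln z - 1/(24*z^2) + 7/(960*z^4)) \<longlongrightarrow> 0) at_top"
    by real_asymp
  have "((\<lambda>z::real. (Digamma (z + 1/2) - ln (z + 1/2)) + (ln (z + 1/2) - ln z - 1/(24*z^2) + 7/(960*z^4))) \<longlongrightarrow> 0 + 0) at_top"
    by (intro tendsto_add 1 2)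
  moreover have "(\<lambda>z::real. (Digamma (z + 1/2) - ln (z + 1/2)) + (ln (z + 1/2) - ln z - 1/(24*z^2) + 7/(960*z^4))) = gg"
    by (rule ext) (simp add: gg_def)
  ultimately show ?thesis by simp
qed



lemma hh_lim: "((\<lambda>z::real. z^7 * hh z) \<longlongrightarrow> 31/1344) at_top"
  unfolding hh_def by real_asymp

lemma gg_bound: "\<exists>W K. W \<ge> 1 \<and> (\<forall>z\<ge>W. \<bar>gg z\<bar> \<le> K / z^5)"
proof -
  define K0 :: real where "K0 = 31/1344 + 1"
  have "\<forall>\<^sub>F z in at_top. dist (z^7 * hh z) (31/1344) < 1"
    using hh_lim by (rule tendstoD) simp
  then obtain W0 where W0: "\<And>z. z \<ge> W0 \<Longrightarrow> dist (z^7 * hh z) (31/1344) < 1"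
    by (auto simp: eventually_at_top_linorder)
  define W where "W = max W0 1"
  have hb: "\<bar>hh z\<bar> \<le> K0 / z^7" if "z \<ge> W" for z
  proof -
    have z: "z \<ge> W0" "z \<ge> 1" using that by (auto simp: W_def)
    have "\<bar>z^7 * hh z\<bar> \<le> K0" using W0[OF z(1)] by (auto simp: dist_real_def K0_def)
    hence "z^7 * \<bar>hh z\<bar> \<le> K0" using z by (simp add: abs_mult)
    moreover have "z^7 > 0" using z by simp
    ultimately show ?thesis by (simp add: field_simps mult.commute)
  qed
  have "\<forall>z\<ge>W. \<bar>gg z\<bar> \<le> (2*K0) / z^5"
  proof (intro allI impI)
    fix z assume zW: "z \<ge> W"
    have z1: "z \<ge> 1" using zW by (auto simp: W_def)
    have K0: "K0 > 0" by (simp add: K0_def)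
    have tm: "\<bar>hh (z + real k)\<bar> \<le> K0 / z^5 * (1/(real k+1)^2)" for k
    proof -
      have "\<bar>hh (z + real k)\<bar> \<le> K0 / (z + real k)^7" using hb[of "z + real k"] zW by simp
      also have "\<dots> \<le> K0 / (z^5 * (real k + 1)^2)"
      proof (rule divide_left_mono)
        have "z^5 * (real k + 1)^2 \<le> (z + real k)^5 * (z + real k)^2"
          using z1 by (intro mult_mono power_mono) auto
        thus "z^5 * (real k + 1)^2 \<le> (z + real k)^7" by (simp add: power_add[symmetric])
      qed (use K0 z1 in auto)
      finally show ?thesis by simp
    qed
    have bnd: "\<bar>gg z - gg (z + real n)\<bar> \<le> 2*K0 / z^5" for n
    proof -
      have "\<bar>gg z - gg (z + real n)\<bar> = \<bar>\<Sum>k<n. hh (z + real k)\<bar>" using gg_tele[of z n] z1 by simp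
      also have "\<dots> \<le> (\<Sum>k<n. \<bar>hh (z + real k)\<bar>)" by (rule sum_abs)
      also have "\<dots> \<le> (\<Sum>k<n. K0 / z^5 * (1/(real k+1)^2))" by (intro sum_mono tm)
      also have "\<dots> = K0 / z^5 * (\<Sum>k<n. 1/(real k+1)^2)" by (simp add: sum_distrib_left)
      also have "\<dots> \<le> K0 / z^5 * 2"
      proof (rule mult_left_mono)
        have "2/(real n+1) \<ge> 0" by simp
        thus "(\<Sum>k<n. 1/(real k+1)^2) \<le> 2" using sum_sq_bound[of n] by linarith
      qed (use K0 z1 in auto)
      finally show ?thesis by (simp add: mult.commute)
    qed
    have f: "filterlim (\<lambda>n. z + real n) at_top sequentially"
      by (intro filterlim_tendsto_add_at_top[OF tendsto_const] filterlim_real_sequentially)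
    have "(\<lambda>n. \<bar>gg z - gg (z + real n)\<bar>) \<longlonglongrightarrow> \<bar>gg z - 0\<bar>"
      by (intro tendsto_intros filterlim_compose[OF gg_lim f])
    hence "\<bar>gg z - 0\<bar> \<le> 2*K0/z^5"
      by (rule LIMSEQ_le_const2) (use bnd in auto)
    thus "\<bar>gg z\<bar> \<le> 2*K0/z^5" by simp
  qed
  moreover have "W \<ge> 1" by (simp add: W_def)
  ultimately show ?thesis by blast
qed

lemma gg_asym: assumes x: "x > 0" shows "((\<lambda>N. N^4 * gg (x*N)) \<longlongrightarrow> 0) at_top"
proof -
  obtain W K where W: "W \<ge> 1" and K: "\<And>z. z \<ge> W \<Longrightarrow> \<bar>gg z\<bar> \<le> K / z^5"
    using gg_bound by blast
  show ?thesis
  proof (rule Lim_null_comparison)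
    have "((\<lambda>N::real. 1 / N) \<longlongrightarrow> 0) at_top" by real_asymp
    from tendsto_mult_right_zero[OF this, of "K/x^5"]
    show "((\<lambda>N. K / (x^5 * N)) \<longlongrightarrow> 0) at_top" by simp
    have "\<forall>\<^sub>F N in at_top. N \<ge> W / x" by (rule eventually_ge_at_top)
    then show "\<forall>\<^sub>F N in at_top. norm (N^4 * gg (x*N)) \<le> K / (x^5 * N)"
    proof (rule eventually_mono)
      fix N assume N: "N \<ge> W / x"
      have xN: "x * N \<ge> W" using N x by (simp add: field_simps)
      have Np: "N > 0" using xN W x by (smt (verit) mult_nonneg_nonpos)
      have "norm (N^4 * gg (x*N)) = N^4 * \<bar>gg (x*N)\<bar>" using Np by (simp add: abs_mult)
      also have "\<dots> \<le> N^4 * (K / (x*N)^5)" using K[OF xN] Np by (intro mult_left_mono) auto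
      also have "\<dots> = K / (x^5 * N)" using Np x by (simp add: field_simps power_mult_distrib) (simp add: power_Suc[symmetric] eval_nat_numeral)
      finally show "norm (N^4 * gg (x*N)) \<le> K / (x^5 * N)" .
    qed
  qed
qed



lemma Digamma_gg: assumes "a > 0" "N > 0"
  shows "Digamma (a*N + 1/2) = gg (a*N) + ln a + ln N + 1/(24*a^2) * (1/N^2) - 7/(960*a^4) * (1/N^4)"
  using assms by (simp add: gg_def ln_mult power_mult_distrib)

lemma main_lim:
  fixes A C a b :: real and f :: "real \<Rightarrow> real"
  assumes a: "a > 0" and b: "b > 0"
    and ev: "\<forall>\<^sub>F N in at_top. f N = A + C*(Digamma (a*N+1/2) - Digamma (b*N+1/2))"
  shows "(f \<longlongrightarrow> A + C*(ln a - ln b)) at_top"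
    and "((\<lambda>N. N^2*(f N - (A + C*(ln a - ln b)))) \<longlongrightarrow> C/24*(1/a^2 - 1/b^2)) at_top"
    and "((\<lambda>N. N^4*(f N - (A + C*(ln a - ln b)) - (C/24*(1/a^2 - 1/b^2))/N^2)) \<longlongrightarrow> -7*C/960*(1/a^4 - 1/b^4)) at_top"
proof -
  define s0 where "s0 = A + C*(ln a - ln b)"
  define s1 where "s1 = C/24*(1/a^2 - 1/b^2)"
  define s2 where "s2 = -7*C/960*(1/a^4 - 1/b^4)"
  define E where "E = (\<lambda>N. N^4 * gg (a*N) - N^4 * gg (b*N))"
  have E: "(E \<longlongrightarrow> 0) at_top"
    unfolding E_def using tendsto_diff[OF gg_asym[OF a] gg_asym[OF b]] by simp
  have inv: "((\<lambda>N::real. 1/N^2) \<longlongrightarrow> 0) at_top" "((\<lambda>N::real. 1/N^4) \<longlongrightarrow> 0) at_top"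
    by real_asymp+
  have key: "\<forall>\<^sub>F N in at_top. f N = s0 + C * E N * (1/N^4) + s1 * (1/N^2) + s2 * (1/N^4)"
    using ev eventually_gt_at_top[of "0::real"]
  proof eventually_elim
    case (elim N)
    have "f N = A + C*((gg (a*N) + ln a + ln N + 1/(24*a^2) * (1/N^2) - 7/(960*a^4) * (1/N^4))
             - (gg (b*N) + ln b + ln N + 1/(24*b^2) * (1/N^2) - 7/(960*b^4) * (1/N^4)))"
      using elim Digamma_gg[OF a, of N] Digamma_gg[OF b, of N] by simp
    also have "\<dots> = s0 + C * E N * (1/N^4) + s1 * (1/N^2) + s2 * (1/N^4)"
      using elim(2) a b unfolding s0_def s1_def s2_def E_def
      by (simp add: field_simps) algebra
    finally show ?case .
  qed
  have "((\<lambda>N. s0 + C * E N * (1/N^4) + s1 * (1/N^2) + s2 * (1/N^4)) \<longlongrightarrow> s0 + C*0*0 + s1*0 + s2*0) at_top"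
    by (intro tendsto_intros E inv)
  hence "((\<lambda>N. s0 + C * E N * (1/N^4) + s1 * (1/N^2) + s2 * (1/N^4)) \<longlongrightarrow> s0) at_top" by simp
  then show "(f \<longlongrightarrow> A + C*(ln a - ln b)) at_top"
    unfolding s0_def[symmetric] by (rule Lim_transform_eventually) (rule eventually_mono[OF key], rule sym)
  have key2: "\<forall>\<^sub>F N in at_top. N^2*(f N - s0) = C * E N * (1/N^2) + s1 + s2 * (1/N^2)"
    using key eventually_gt_at_top[of "0::real"]
  proof eventually_elim
    case (elim N)
    hence "N^2*(f N - s0) = N^2*(C * E N * (1/N^4) + s1 * (1/N^2) + s2 * (1/N^4))" by simp
    also have "\<dots> = C * E N * (1/N^2) + s1 + s2*(1/N^2)" using elim(2) by (simp add: field_simps eval_nat_numeral)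
    finally show ?case .
  qed
  have "((\<lambda>N. C * E N * (1/N^2) + s1 + s2 * (1/N^2)) \<longlongrightarrow> C*0*0 + s1 + s2*0) at_top"
    by (intro tendsto_intros E inv)
  hence "((\<lambda>N. C * E N * (1/N^2) + s1 + s2 * (1/N^2)) \<longlongrightarrow> s1) at_top" by simp
  then show "((\<lambda>N. N^2*(f N - (A + C*(ln a - ln b)))) \<longlongrightarrow> C/24*(1/a^2 - 1/b^2)) at_top"
    unfolding s0_def[symmetric] s1_def[symmetric]
    by (rule Lim_transform_eventually) (rule eventually_mono[OF key2], rule sym)
  have key3: "\<forall>\<^sub>F N in at_top. N^4*(f N - s0 - s1/N^2) = C * E N + s2"
    using key eventually_gt_at_top[of "0::real"]
  proof eventually_elim
    case (elim N)
    hence "N^4*(f N - s0 - s1/N^2) = N^4*(C * E N * (1/N^4) + s1 * (1/N^2) + s2 * (1/N^4) - s1/N^2)" by simp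
    also have "\<dots> = C * E N + s2" using elim(2) by (simp add: field_simps eval_nat_numeral)
    finally show ?case .
  qed
  have "((\<lambda>N. C * E N + s2) \<longlongrightarrow> C*0 + s2) at_top"
    by (intro tendsto_intros E)
  hence "((\<lambda>N. C * E N + s2) \<longlongrightarrow> s2) at_top" by simp
  then show "((\<lambda>N. N^4*(f N - (A + C*(ln a - ln b)) - (C/24*(1/a^2 - 1/b^2))/N^2)) \<longlongrightarrow> -7*C/960*(1/a^4 - 1/b^4)) at_top"
    unfolding s0_def[symmetric] s1_def[symmetric] s2_def[symmetric]
    by (rule Lim_transform_eventually) (rule eventually_mono[OF key3], rule sym)
qed



definition T0 where "T0 a c = (\<lambda>t::real. t * ln (a*t+c))"
definition T1 where "T1 a c = (\<lambda>t::real. ln (a*t+c) + a*t/(a*t+c))"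
definition T2 where "T2 a c = (\<lambda>t::real. a/(a*t+c) + a*c/(a*t+c)^2)"
definition T3 where "T3 a c = (\<lambda>t::real. - (a^2/(a*t+c)^2 + 2*a^2*c/(a*t+c)^3))"
definition T4 where "T4 a c = (\<lambda>t::real. 2*a^3/(a*t+c)^3 + 6*a^3*c/(a*t+c)^4)"

lemma dT0: assumes "a*t+c > 0" shows "(T0 a c has_real_derivative T1 a c t) (at t)"
proof -
  have "(T0 a c has_real_derivative 1 * ln (a*t+c) + t * (a / (a*t+c))) (at t)"
    unfolding T0_def using assms by (auto intro!: derivative_eq_intros)
  thus ?thesis by (simp add: T1_def mult.commute)
qed

lemma dT1: assumes "a*t+c > 0" shows "(T1 a c has_real_derivative T2 a c t) (at t)"
proof -
  define u where "u = a*t+c"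
  have u: "u > 0" using assms by (simp add: u_def)
  show ?thesis
    unfolding T1_def T2_def
    apply (intro derivative_eq_intros)
    apply (simp_all only: u_def[symmetric])
    using u apply (auto simp: field_simps eval_nat_numeral u_def)
    done
qed

lemma dT2: assumes "a*t+c > 0" shows "(T2 a c has_real_derivative T3 a c t) (at t)"
proof -
  define u where "u = a*t+c"
  have u: "u > 0" using assms by (simp add: u_def)
  show ?thesis
    unfolding T2_def T3_def
    apply (intro derivative_eq_intros)
    apply (simp_all only: u_def[symmetric])
    using u apply (auto simp: field_simps eval_nat_numeral)
    done
qed

lemma dT3: assumes "a*t+c > 0" shows "(T3 a c has_real_derivative T4 a c t) (at t)"
proof -
  define u where "u = a*t+c"
  have u: "u > 0" using assms by (simp add: u_def)
  show ?thesis
    unfolding T3_def T4_def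
    apply (intro derivative_eq_intros)
    apply (simp_all only: u_def[symmetric])
    using u apply (auto simp: field_simps eval_nat_numeral)
    done
qed



lemma deriv_step:
  assumes "open U" "\<And>t. t \<in> U \<Longrightarrow> G t = g t"
    "\<And>t. t \<in> U \<Longrightarrow> (g has_real_derivative g' t) (at t)" "t \<in> U"
  shows "deriv G t = g' t"
proof -
  have "(G has_real_derivative g' t) (at t)"
    using has_field_derivative_transform_within_open[OF assms(3)[OF assms(4)] assms(1) assms(4), of G]
      assms(2) by auto
  thus ?thesis by (rule DERIV_imp_deriv)
qed

lemma dlin:
  assumes "(f has_real_derivative f') (at t)" "(g has_real_derivative g') (at t)"
    "D = q + B*(f' - g')"
  shows "((\<lambda>x. p + q*x + B*(f x - g x)) has_real_derivative D) (at t)"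
  using assms by (auto intro!: derivative_eq_intros)

definition GG where "GG T p q B a1 c1 a2 c2 = (\<lambda>x::real. p + q*x + B*(T a1 c1 x - T a2 c2 x))"

lemma case_gen:
  fixes \<beta> :: nat and \<tau> \<alpha> \<gamma> B a1 c1 a2 c2 :: real and U :: "real set"
  assumes U: "open U" "\<tau> \<in> U"
    and pos: "\<And>t. t \<in> U \<Longrightarrow> a1*t+c1 > 0 \<and> a2*t+c2 > 0"
    and ev: "\<And>t. t \<in> U \<Longrightarrow> \<forall>\<^sub>F N in at_top. SN \<beta> N t = (\<alpha>+\<gamma>*t) + (B*t)*(Digamma ((a1*t+c1)*N+1/2) - Digamma ((a2*t+c2)*N+1/2))"
  shows "((\<lambda>N. SN \<beta> N \<tau>) \<longlongrightarrow> S0inf \<beta> \<tau>) at_top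
       \<and> ((\<lambda>N. N^2 * (SN \<beta> N \<tau> - S0inf \<beta> \<tau>)) \<longlongrightarrow> S1inf \<beta> \<tau>) at_top
       \<and> ((\<lambda>N. N^4 * (SN \<beta> N \<tau> - S0inf \<beta> \<tau> - S1inf \<beta> \<tau> / N^2)) \<longlongrightarrow> S2inf \<beta> \<tau>) at_top
       \<and> S1inf \<beta> \<tau> = (B*\<tau>)/24*(1/(a1*\<tau>+c1)^2 - 1/(a2*\<tau>+c2)^2)
       \<and> S2inf \<beta> \<tau> = -7*(B*\<tau>)/960*(1/(a1*\<tau>+c1)^4 - 1/(a2*\<tau>+c2)^4)
       \<and> (deriv ^^ 2) (S0inf \<beta>) \<tau> = GG T2 0 0 B a1 c1 a2 c2 \<tau>
       \<and> (deriv ^^ 3) (S0inf \<beta>) \<tau> = GG T3 0 0 B a1 c1 a2 c2 \<tau>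
       \<and> (deriv ^^ 4) (S0inf \<beta>) \<tau> = GG T4 0 0 B a1 c1 a2 c2 \<tau>"
proof -
  have S0: "S0inf \<beta> t = GG T0 \<alpha> \<gamma> B a1 c1 a2 c2 t" if t: "t \<in> U" for t
  proof -
    have "((\<lambda>N. SN \<beta> N t) \<longlongrightarrow> (\<alpha>+\<gamma>*t) + (B*t)*(ln (a1*t+c1) - ln (a2*t+c2))) at_top"
      using main_lim(1)[of "a1*t+c1" "a2*t+c2" "\<lambda>N. SN \<beta> N t" "\<alpha>+\<gamma>*t" "B*t"] pos[OF t] ev[OF t] by blast
    hence "S0inf \<beta> t = (\<alpha>+\<gamma>*t) + (B*t)*(ln (a1*t+c1) - ln (a2*t+c2))"
      unfolding S0inf_def by (intro tendsto_Lim) simp_all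
    thus ?thesis by (simp add: GG_def T0_def algebra_simps)
  qed
  have S0': "S0inf \<beta> \<tau> = (\<alpha>+\<gamma>*\<tau>) + (B*\<tau>)*(ln (a1*\<tau>+c1) - ln (a2*\<tau>+c2))"
    using S0[OF U(2)] by (simp add: GG_def T0_def algebra_simps)
  have l1: "((\<lambda>N. SN \<beta> N \<tau>) \<longlongrightarrow> S0inf \<beta> \<tau>) at_top"
    using main_lim(1)[of "a1*\<tau>+c1" "a2*\<tau>+c2" "\<lambda>N. SN \<beta> N \<tau>" "\<alpha>+\<gamma>*\<tau>" "B*\<tau>"] pos[OF U(2)] ev[OF U(2)] S0' by simp
  have l2': "((\<lambda>N. N^2 * (SN \<beta> N \<tau> - S0inf \<beta> \<tau>)) \<longlongrightarrow> (B*\<tau>)/24*(1/(a1*\<tau>+c1)^2 - 1/(a2*\<tau>+c2)^2)) at_top"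
    using main_lim(2)[of "a1*\<tau>+c1" "a2*\<tau>+c2" "\<lambda>N. SN \<beta> N \<tau>" "\<alpha>+\<gamma>*\<tau>" "B*\<tau>"] pos[OF U(2)] ev[OF U(2)] S0' by simp
  have S1: "S1inf \<beta> \<tau> = (B*\<tau>)/24*(1/(a1*\<tau>+c1)^2 - 1/(a2*\<tau>+c2)^2)"
    unfolding S1inf_def by (intro tendsto_Lim l2') simp
  have l3': "((\<lambda>N. N^4 * (SN \<beta> N \<tau> - S0inf \<beta> \<tau> - S1inf \<beta> \<tau> / N^2)) \<longlongrightarrow> -7*(B*\<tau>)/960*(1/(a1*\<tau>+c1)^4 - 1/(a2*\<tau>+c2)^4)) at_top"
    using main_lim(3)[of "a1*\<tau>+c1" "a2*\<tau>+c2" "\<lambda>N. SN \<beta> N \<tau>" "\<alpha>+\<gamma>*\<tau>" "B*\<tau>"] pos[OF U(2)] ev[OF U(2)] unfolding S0' S1 by blast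
  have S2: "S2inf \<beta> \<tau> = -7*(B*\<tau>)/960*(1/(a1*\<tau>+c1)^4 - 1/(a2*\<tau>+c2)^4)"
    unfolding S2inf_def by (intro tendsto_Lim l3') simp
  have D0: "(GG T0 \<alpha> \<gamma> B a1 c1 a2 c2 has_real_derivative GG T1 \<gamma> 0 B a1 c1 a2 c2 t) (at t)" if "t \<in> U" for t
    unfolding GG_def using pos[OF that] by (intro dlin) (auto intro!: dT0 simp: GG_def)
  have D1: "(GG T1 \<gamma> 0 B a1 c1 a2 c2 has_real_derivative GG T2 0 0 B a1 c1 a2 c2 t) (at t)" if "t \<in> U" for t
    unfolding GG_def using pos[OF that] by (intro dlin) (auto intro!: dT1)
  have D2: "(GG T2 0 0 B a1 c1 a2 c2 has_real_derivative GG T3 0 0 B a1 c1 a2 c2 t) (at t)" if "t \<in> U" for t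
    unfolding GG_def using pos[OF that] by (intro dlin) (auto intro!: dT2)
  have D3: "(GG T3 0 0 B a1 c1 a2 c2 has_real_derivative GG T4 0 0 B a1 c1 a2 c2 t) (at t)" if "t \<in> U" for t
    unfolding GG_def using pos[OF that] by (intro dlin) (auto intro!: dT3)
  have E1: "deriv (S0inf \<beta>) t = GG T1 \<gamma> 0 B a1 c1 a2 c2 t" if "t \<in> U" for t
    by (rule deriv_step[OF U(1) S0 D0 that])
  have E2: "(deriv^^2) (S0inf \<beta>) t = GG T2 0 0 B a1 c1 a2 c2 t" if "t \<in> U" for t
  proof -
    have "(deriv^^2) (S0inf \<beta>) = deriv (deriv (S0inf \<beta>))" by (simp add: numeral_2_eq_2)
    thus ?thesis using deriv_step[OF U(1) E1 D1 that] by simp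
  qed
  have E3: "(deriv^^3) (S0inf \<beta>) t = GG T3 0 0 B a1 c1 a2 c2 t" if "t \<in> U" for t
  proof -
    have "(deriv^^3) (S0inf \<beta>) = deriv ((deriv^^2) (S0inf \<beta>))" by (simp add: eval_nat_numeral)
    thus ?thesis using deriv_step[OF U(1) E2 D2 that] by simp
  qed
  have E4: "(deriv^^4) (S0inf \<beta>) t = GG T4 0 0 B a1 c1 a2 c2 t" if "t \<in> U" for t
  proof -
    have "(deriv^^4) (S0inf \<beta>) = deriv ((deriv^^3) (S0inf \<beta>))" by (simp add: eval_nat_numeral)
    thus ?thesis using deriv_step[OF U(1) E3 D3 that] by simp
  qed
  have l2: "((\<lambda>N. N^2 * (SN \<beta> N \<tau> - S0inf \<beta> \<tau>)) \<longlongrightarrow> S1inf \<beta> \<tau>) at_top"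
    unfolding S1 by (rule l2')
  have l3: "((\<lambda>N. N^4 * (SN \<beta> N \<tau> - S0inf \<beta> \<tau> - S1inf \<beta> \<tau> / N^2)) \<longlongrightarrow> S2inf \<beta> \<tau>) at_top"
    unfolding S2 by (rule l3')
  show ?thesis using l1 l2 l3 S1 S2 E2[OF U(2)] E3[OF U(2)] E4[OF U(2)] by (intro conjI)
qed



lemma ev1: assumes t: "t \<in> {0<..<1::real}"
  shows "\<forall>\<^sub>F N in at_top. SN 1 N t = (0+2*t) + ((-1)*t)*(Digamma ((1*t+1/2)*N+1/2) - Digamma ((0*t+1/2)*N+1/2))"
proof (rule always_eventually, rule allI)
  fix N :: real
  have d1: "Digamma (t*N+(N+1)/2) = Digamma ((1*t+1/2)*N+1/2)" by (intro arg_cong[where f=Digamma]) (simp add: field_simps)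
  have d2: "Digamma ((N+1)/2) = Digamma ((0*t+1/2)*N+1/2)" by (intro arg_cong[where f=Digamma]) (simp add: field_simps)
  have "SN 1 N t = 2*t - t*(Digamma (t*N+(N+1)/2) - Digamma ((N+1)/2))" using t by (simp add: SN_def S1N_def)
  then show "SN 1 N t = (0+2*t) + ((-1)*t)*(Digamma ((1*t+1/2)*N+1/2) - Digamma ((0*t+1/2)*N+1/2))"
    by (simp only: d1 d2; simp add: field_simps)
qed

lemma ev2: assumes t: "t \<in> {(1::real)<..}"
  shows "\<forall>\<^sub>F N in at_top. SN 1 N t = (2+0*t) + ((-1)*t)*(Digamma ((1*t+1/2)*N+1/2) - Digamma ((1*t+(-(1/2)))*N+1/2))"
proof (rule always_eventually, rule allI)
  fix N :: real
  have d1: "Digamma (t*N+(N+1)/2) = Digamma ((1*t+1/2)*N+1/2)" by (intro arg_cong[where f=Digamma]) (simp add: field_simps)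
  have d2: "Digamma (t*N+(1-N)/2) = Digamma ((1*t+(-(1/2)))*N+1/2)" by (intro arg_cong[where f=Digamma]) (simp add: field_simps)
  have "SN 1 N t = 2 - t*(Digamma (t*N+(N+1)/2) - Digamma (t*N+(1-N)/2))" using t by (simp add: SN_def S1N_def)
  then show "SN 1 N t = (2+0*t) + ((-1)*t)*(Digamma ((1*t+1/2)*N+1/2) - Digamma ((1*t+(-(1/2)))*N+1/2))"
    by (simp only: d1 d2; simp add: field_simps)
qed

lemma ev3: assumes t: "t \<in> {0<..<1::real}"
  shows "\<forall>\<^sub>F N in at_top. SN 4 N t = (0+1/2*t) + (1/4*t)*(Digamma ((0*t+1)*N+1/2) - Digamma (((-1)*t+1)*N+1/2))"
proof (rule always_eventually, rule allI)
  fix N :: real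
  have d1: "Digamma (N+1/2) = Digamma ((0*t+1)*N+1/2)" by (intro arg_cong[where f=Digamma]) (simp add: field_simps)
  have d2: "Digamma (N-t*N+1/2) = Digamma (((-1)*t+1)*N+1/2)" by (intro arg_cong[where f=Digamma]) (simp add: field_simps)
  have "SN 4 N t = t/2*(1+(Digamma (N+1/2) - Digamma (N-t*N+1/2))/2)" using t by (simp add: SN_def S4N_def)
  then show "SN 4 N t = (0+1/2*t) + (1/4*t)*(Digamma ((0*t+1)*N+1/2) - Digamma (((-1)*t+1)*N+1/2))"
    by (simp only: d1 d2; simp add: field_simps)
qed

lemma ev4: assumes t: "t \<in> {1<..<2::real}"
  shows "\<forall>\<^sub>F N in at_top. SN 4 N t = (0+1/2*t) + (1/4*t)*(Digamma ((0*t+1)*N+1/2) - Digamma ((1*t+(-1))*N+1/2))"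
  using eventually_gt_at_top[of "1/(2-t)"]
proof (rule eventually_mono)
  fix N :: real assume N: "N > 1/(2-t)"
  have t2: "2 - t > 0" using t by simp
  have Np: "N > 0" using N t2 by (smt (verit) divide_pos_pos)
  have "1/N < 2 - t" using N t2 Np by (simp add: field_simps)
  hence lt: "t < 2 - 1/N" by simp
  have d1: "Digamma (N+1/2) = Digamma ((0*t+1)*N+1/2)" by (intro arg_cong[where f=Digamma]) (simp add: field_simps)
  have d2: "Digamma (-N+t*N+1/2) = Digamma ((1*t+(-1))*N+1/2)" by (intro arg_cong[where f=Digamma]) (simp add: field_simps)
  have "SN 4 N t = t/2*(1+(Digamma (N+1/2) - Digamma (-N+t*N+1/2))/2)" using t lt by (simp add: SN_def S4N_def)
  then show "SN 4 N t = (0+1/2*t) + (1/4*t)*(Digamma ((0*t+1)*N+1/2) - Digamma ((1*t+(-1))*N+1/2))"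
    by (simp only: d1 d2; simp add: field_simps)
qed

lemma ev5: assumes t: "t \<in> {(2::real)<..}"
  shows "\<forall>\<^sub>F N in at_top. SN 4 N t = (1+0*t) + (0*t)*(Digamma ((0*t+1)*N+1/2) - Digamma ((0*t+1)*N+1/2))"
  using eventually_gt_at_top[of "0::real"]
proof (rule eventually_mono)
  fix N :: real assume N: "N > 0"
  have p: "1/N > 0" using N by simp
  have "t > 2" using t by simp
  hence "\<not> t < 2 - 1/N" using p by linarith
  then show "SN 4 N t = (1+0*t) + (0*t)*(Digamma ((0*t+1)*N+1/2) - Digamma ((0*t+1)*N+1/2))"
    using t by (simp add: SN_def S4N_def)
qed



lemma case_final:
  fixes \<beta> :: nat and \<tau> \<alpha> \<gamma> B a1 c1 a2 c2 :: real and U :: "real set"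
  assumes U: "open U" "\<tau> \<in> U"
    and pos: "\<And>t. t \<in> U \<Longrightarrow> a1*t+c1 > 0 \<and> a2*t+c2 > 0"
    and ev: "\<And>t. t \<in> U \<Longrightarrow> \<forall>\<^sub>F N in at_top. SN \<beta> N t = (\<alpha>+\<gamma>*t) + (B*t)*(Digamma ((a1*t+c1)*N+1/2) - Digamma ((a2*t+c2)*N+1/2))"
    and I1: "(B*\<tau>)/24*(1/(a1*\<tau>+c1)^2 - 1/(a2*\<tau>+c2)^2) = cbeta \<beta> * \<tau>^2 * GG T2 0 0 B a1 c1 a2 c2 \<tau>"
    and I2: "-7*(B*\<tau>)/960*(1/(a1*\<tau>+c1)^4 - 1/(a2*\<tau>+c2)^4) = dbeta \<beta> * (\<tau>^4 * GG T4 0 0 B a1 c1 a2 c2 \<tau>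
                                 + 8 * \<tau>^3 * GG T3 0 0 B a1 c1 a2 c2 \<tau>
                                 + 12 * \<tau>^2 * GG T2 0 0 B a1 c1 a2 c2 \<tau>)"
  shows "((\<lambda>N. SN \<beta> N \<tau>) \<longlongrightarrow> S0inf \<beta> \<tau>) at_top
       \<and> ((\<lambda>N. N^2 * (SN \<beta> N \<tau> - S0inf \<beta> \<tau>)) \<longlongrightarrow> S1inf \<beta> \<tau>) at_top
       \<and> ((\<lambda>N. N^4 * (SN \<beta> N \<tau> - S0inf \<beta> \<tau> - S1inf \<beta> \<tau> / N^2)) \<longlongrightarrow> S2inf \<beta> \<tau>) at_top
       \<and> S1inf \<beta> \<tau> = cbeta \<beta> * \<tau>^2 * (deriv ^^ 2) (S0inf \<beta>) \<tau>
       \<and> S2inf \<beta> \<tau> = dbeta \<beta> * (\<tau>^4 * (deriv ^^ 4) (S0inf \<beta>) \<tau>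
                                 + 8 * \<tau>^3 * (deriv ^^ 3) (S0inf \<beta>) \<tau>
                                 + 12 * \<tau>^2 * (deriv ^^ 2) (S0inf \<beta>) \<tau>)"
proof -
  have R: "((\<lambda>N. SN \<beta> N \<tau>) \<longlongrightarrow> S0inf \<beta> \<tau>) at_top
       \<and> ((\<lambda>N. N^2 * (SN \<beta> N \<tau> - S0inf \<beta> \<tau>)) \<longlongrightarrow> S1inf \<beta> \<tau>) at_top
       \<and> ((\<lambda>N. N^4 * (SN \<beta> N \<tau> - S0inf \<beta> \<tau> - S1inf \<beta> \<tau> / N^2)) \<longlongrightarrow> S2inf \<beta> \<tau>) at_top
       \<and> S1inf \<beta> \<tau> = (B*\<tau>)/24*(1/(a1*\<tau>+c1)^2 - 1/(a2*\<tau>+c2)^2)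
       \<and> S2inf \<beta> \<tau> = -7*(B*\<tau>)/960*(1/(a1*\<tau>+c1)^4 - 1/(a2*\<tau>+c2)^4)
       \<and> (deriv ^^ 2) (S0inf \<beta>) \<tau> = GG T2 0 0 B a1 c1 a2 c2 \<tau>
       \<and> (deriv ^^ 3) (S0inf \<beta>) \<tau> = GG T3 0 0 B a1 c1 a2 c2 \<tau>
       \<and> (deriv ^^ 4) (S0inf \<beta>) \<tau> = GG T4 0 0 B a1 c1 a2 c2 \<tau>"
    by (rule case_gen[OF U pos ev])
  then have l: "((\<lambda>N. SN \<beta> N \<tau>) \<longlongrightarrow> S0inf \<beta> \<tau>) at_top
       \<and> ((\<lambda>N. N^2 * (SN \<beta> N \<tau> - S0inf \<beta> \<tau>)) \<longlongrightarrow> S1inf \<beta> \<tau>) at_top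
       \<and> ((\<lambda>N. N^4 * (SN \<beta> N \<tau> - S0inf \<beta> \<tau> - S1inf \<beta> \<tau> / N^2)) \<longlongrightarrow> S2inf \<beta> \<tau>) at_top"
    and s1: "S1inf \<beta> \<tau> = (B*\<tau>)/24*(1/(a1*\<tau>+c1)^2 - 1/(a2*\<tau>+c2)^2)"
    and s2: "S2inf \<beta> \<tau> = -7*(B*\<tau>)/960*(1/(a1*\<tau>+c1)^4 - 1/(a2*\<tau>+c2)^4)"
    and d2: "(deriv ^^ 2) (S0inf \<beta>) \<tau> = GG T2 0 0 B a1 c1 a2 c2 \<tau>"
    and d3: "(deriv ^^ 3) (S0inf \<beta>) \<tau> = GG T3 0 0 B a1 c1 a2 c2 \<tau>"
    and d4: "(deriv ^^ 4) (S0inf \<beta>) \<tau> = GG T4 0 0 B a1 c1 a2 c2 \<tau>"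
    by blast+
  have e1: "S1inf \<beta> \<tau> = cbeta \<beta> * \<tau>^2 * (deriv ^^ 2) (S0inf \<beta>) \<tau>"
    unfolding s1 d2 by (rule I1)
  have e2: "S2inf \<beta> \<tau> = dbeta \<beta> * (\<tau>^4 * (deriv ^^ 4) (S0inf \<beta>) \<tau>
                                 + 8 * \<tau>^3 * (deriv ^^ 3) (S0inf \<beta>) \<tau>
                                 + 12 * \<tau>^2 * (deriv ^^ 2) (S0inf \<beta>) \<tau>)"
    unfolding s2 d2 d3 d4 by (rule I2)
  show ?thesis using l e1 e2 by blast
qed

lemma I_case1: assumes "\<tau> \<in> {0<..<1::real}"
  shows "((-1)*\<tau>)/24*(1/(1*\<tau>+1/2)^2 - 1/(0*\<tau>+1/2)^2) = cbeta 1 * \<tau>^2 * GG T2 0 0 (-1) 1 (1/2) 0 (1/2) \<tau>"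
    "-7*((-1)*\<tau>)/960*(1/(1*\<tau>+1/2)^4 - 1/(0*\<tau>+1/2)^4) = dbeta 1 * (\<tau>^4 * GG T4 0 0 (-1) 1 (1/2) 0 (1/2) \<tau>
                                 + 8 * \<tau>^3 * GG T3 0 0 (-1) 1 (1/2) 0 (1/2) \<tau>
                                 + 12 * \<tau>^2 * GG T2 0 0 (-1) 1 (1/2) 0 (1/2) \<tau>)"
proof -
  define u where "u = \<tau> + 1/2"
  have u: "u > 0" using assms by (simp add: u_def)
  have t: "\<tau> = u - 1/2" by (simp add: u_def)
  show "((-1)*\<tau>)/24*(1/(1*\<tau>+1/2)^2 - 1/(0*\<tau>+1/2)^2) = cbeta 1 * \<tau>^2 * GG T2 0 0 (-1) 1 (1/2) 0 (1/2) \<tau>"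
    unfolding cbeta_def GG_def T2_def using u by (simp add: t field_simps; simp add: algebra_simps eval_nat_numeral)
  show "-7*((-1)*\<tau>)/960*(1/(1*\<tau>+1/2)^4 - 1/(0*\<tau>+1/2)^4) = dbeta 1 * (\<tau>^4 * GG T4 0 0 (-1) 1 (1/2) 0 (1/2) \<tau>
                                 + 8 * \<tau>^3 * GG T3 0 0 (-1) 1 (1/2) 0 (1/2) \<tau>
                                 + 12 * \<tau>^2 * GG T2 0 0 (-1) 1 (1/2) 0 (1/2) \<tau>)"
    unfolding dbeta_def GG_def T2_def T3_def T4_def using u by (simp add: t field_simps; simp add: algebra_simps eval_nat_numeral)
qed

lemma I_case2: assumes "\<tau> \<in> {(1::real)<..}"
  shows "((-1)*\<tau>)/24*(1/(1*\<tau>+(1/2))^2 - 1/(1*\<tau>+(-(1/2)))^2) = cbeta 1 * \<tau>^2 * GG T2 0 0 (-1) 1 (1/2) 1 (-(1/2)) \<tau>"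
    "-7*((-1)*\<tau>)/960*(1/(1*\<tau>+(1/2))^4 - 1/(1*\<tau>+(-(1/2)))^4) = dbeta 1 * (\<tau>^4 * GG T4 0 0 (-1) 1 (1/2) 1 (-(1/2)) \<tau>
                                 + 8 * \<tau>^3 * GG T3 0 0 (-1) 1 (1/2) 1 (-(1/2)) \<tau>
                                 + 12 * \<tau>^2 * GG T2 0 0 (-1) 1 (1/2) 1 (-(1/2)) \<tau>)"
proof -
  define u where "u = \<tau>+1/2"
  define w where "w = \<tau> - 1/2"
  have e: "1*\<tau>+(1/2) = u" "1*\<tau>+(-(1/2)) = w" by (simp_all add: u_def w_def)
  have nz2: "u \<noteq> 0" "w \<noteq> 0" using assms by (auto simp: u_def w_def)
  show "((-1)*\<tau>)/24*(1/(1*\<tau>+(1/2))^2 - 1/(1*\<tau>+(-(1/2)))^2) = cbeta 1 * \<tau>^2 * GG T2 0 0 (-1) 1 (1/2) 1 (-(1/2)) \<tau>"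
    unfolding cbeta_def GG_def T2_def e
    using nz2 apply (simp add: field_simps)
    apply (unfold u_def w_def)
    apply algebra
    done
  show "-7*((-1)*\<tau>)/960*(1/(1*\<tau>+(1/2))^4 - 1/(1*\<tau>+(-(1/2)))^4) = dbeta 1 * (\<tau>^4 * GG T4 0 0 (-1) 1 (1/2) 1 (-(1/2)) \<tau>
                                 + 8 * \<tau>^3 * GG T3 0 0 (-1) 1 (1/2) 1 (-(1/2)) \<tau>
                                 + 12 * \<tau>^2 * GG T2 0 0 (-1) 1 (1/2) 1 (-(1/2)) \<tau>)"
    unfolding dbeta_def GG_def T2_def T3_def T4_def e
    using nz2 apply (simp add: field_simps)
    apply (unfold u_def w_def)
    apply algebra
    done
qed

lemma I_case3: assumes "\<tau> \<in> {0<..<1::real}"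
  shows "((1/4)*\<tau>)/24*(1/(0*\<tau>+1)^2 - 1/((-1)*\<tau>+1)^2) = cbeta 4 * \<tau>^2 * GG T2 0 0 (1/4) 0 1 (-1) 1 \<tau>"
    "-7*((1/4)*\<tau>)/960*(1/(0*\<tau>+1)^4 - 1/((-1)*\<tau>+1)^4) = dbeta 4 * (\<tau>^4 * GG T4 0 0 (1/4) 0 1 (-1) 1 \<tau>
                                 + 8 * \<tau>^3 * GG T3 0 0 (1/4) 0 1 (-1) 1 \<tau>
                                 + 12 * \<tau>^2 * GG T2 0 0 (1/4) 0 1 (-1) 1 \<tau>)"
proof -
  have nz: "1 - \<tau> \<noteq> 0" "\<tau> \<noteq> 1" using assms by auto
  show "((1/4)*\<tau>)/24*(1/(0*\<tau>+1)^2 - 1/((-1)*\<tau>+1)^2) = cbeta 4 * \<tau>^2 * GG T2 0 0 (1/4) 0 1 (-1) 1 \<tau>"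
    unfolding cbeta_def GG_def T2_def using nz by (simp add: field_simps; simp add: algebra_simps eval_nat_numeral)
  show "-7*((1/4)*\<tau>)/960*(1/(0*\<tau>+1)^4 - 1/((-1)*\<tau>+1)^4) = dbeta 4 * (\<tau>^4 * GG T4 0 0 (1/4) 0 1 (-1) 1 \<tau>
                                 + 8 * \<tau>^3 * GG T3 0 0 (1/4) 0 1 (-1) 1 \<tau>
                                 + 12 * \<tau>^2 * GG T2 0 0 (1/4) 0 1 (-1) 1 \<tau>)"
    unfolding dbeta_def GG_def T2_def T3_def T4_def using nz by (simp add: field_simps; simp add: algebra_simps eval_nat_numeral)
qed

lemma I_case4: assumes "\<tau> \<in> {1<..<2::real}"
  shows "((1/4)*\<tau>)/24*(1/(0*\<tau>+1)^2 - 1/(1*\<tau>+(-1))^2) = cbeta 4 * \<tau>^2 * GG T2 0 0 (1/4) 0 1 1 (-1) \<tau>"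
    "-7*((1/4)*\<tau>)/960*(1/(0*\<tau>+1)^4 - 1/(1*\<tau>+(-1))^4) = dbeta 4 * (\<tau>^4 * GG T4 0 0 (1/4) 0 1 1 (-1) \<tau>
                                 + 8 * \<tau>^3 * GG T3 0 0 (1/4) 0 1 1 (-1) \<tau>
                                 + 12 * \<tau>^2 * GG T2 0 0 (1/4) 0 1 1 (-1) \<tau>)"
proof -
  have nz: "\<tau> - 1 \<noteq> 0" "\<tau> \<noteq> 1" using assms by auto
  show "((1/4)*\<tau>)/24*(1/(0*\<tau>+1)^2 - 1/(1*\<tau>+(-1))^2) = cbeta 4 * \<tau>^2 * GG T2 0 0 (1/4) 0 1 1 (-1) \<tau>"
    unfolding cbeta_def GG_def T2_def using nz by (simp add: field_simps; simp add: algebra_simps eval_nat_numeral)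
  show "-7*((1/4)*\<tau>)/960*(1/(0*\<tau>+1)^4 - 1/(1*\<tau>+(-1))^4) = dbeta 4 * (\<tau>^4 * GG T4 0 0 (1/4) 0 1 1 (-1) \<tau>
                                 + 8 * \<tau>^3 * GG T3 0 0 (1/4) 0 1 1 (-1) \<tau>
                                 + 12 * \<tau>^2 * GG T2 0 0 (1/4) 0 1 1 (-1) \<tau>)"
    unfolding dbeta_def GG_def T2_def T3_def T4_def using nz by (simp add: field_simps; simp add: algebra_simps eval_nat_numeral)
qed

lemma I_case5: assumes "\<tau> \<in> {(2::real)<..}"
  shows "(0*\<tau>)/24*(1/(0*\<tau>+1)^2 - 1/(0*\<tau>+1)^2) = cbeta 4 * \<tau>^2 * GG T2 0 0 0 0 1 0 1 \<tau>"
    "-7*(0*\<tau>)/960*(1/(0*\<tau>+1)^4 - 1/(0*\<tau>+1)^4) = dbeta 4 * (\<tau>^4 * GG T4 0 0 0 0 1 0 1 \<tau>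
                                 + 8 * \<tau>^3 * GG T3 0 0 0 0 1 0 1 \<tau>
                                 + 12 * \<tau>^2 * GG T2 0 0 0 0 1 0 1 \<tau>)"
proof -
  have nz: "\<tau> \<noteq> 0" using assms by auto
  show "(0*\<tau>)/24*(1/(0*\<tau>+1)^2 - 1/(0*\<tau>+1)^2) = cbeta 4 * \<tau>^2 * GG T2 0 0 0 0 1 0 1 \<tau>"
    unfolding cbeta_def GG_def T2_def using nz by (simp add: field_simps; simp add: algebra_simps eval_nat_numeral)
  show "-7*(0*\<tau>)/960*(1/(0*\<tau>+1)^4 - 1/(0*\<tau>+1)^4) = dbeta 4 * (\<tau>^4 * GG T4 0 0 0 0 1 0 1 \<tau>
                                 + 8 * \<tau>^3 * GG T3 0 0 0 0 1 0 1 \<tau>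
                                 + 12 * \<tau>^2 * GG T2 0 0 0 0 1 0 1 \<tau>)"
    unfolding dbeta_def GG_def T2_def T3_def T4_def using nz by (simp add: field_simps; simp add: algebra_simps eval_nat_numeral)
qed



theorem mainTheorem8:
  fixes \<beta> :: nat and \<tau> :: real
  assumes "\<beta> \<in> {1, 4}" and "\<tau> > 0" and "\<tau> \<noteq> 1" and "\<beta> = 4 \<longrightarrow> \<tau> \<noteq> 2"
  shows "((\<lambda>N. SN \<beta> N \<tau>) \<longlongrightarrow> S0inf \<beta> \<tau>) at_top
       \<and> ((\<lambda>N. N^2 * (SN \<beta> N \<tau> - S0inf \<beta> \<tau>)) \<longlongrightarrow> S1inf \<beta> \<tau>) at_top
       \<and> ((\<lambda>N. N^4 * (SN \<beta> N \<tau> - S0inf \<beta> \<tau> - S1inf \<beta> \<tau> / N^2)) \<longlongrightarrow> S2inf \<beta> \<tau>) at_top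
       \<and> S1inf \<beta> \<tau> = cbeta \<beta> * \<tau>^2 * (deriv ^^ 2) (S0inf \<beta>) \<tau>
       \<and> S2inf \<beta> \<tau> = dbeta \<beta> * (\<tau>^4 * (deriv ^^ 4) (S0inf \<beta>) \<tau>
                                 + 8 * \<tau>^3 * (deriv ^^ 3) (S0inf \<beta>) \<tau>
                                 + 12 * \<tau>^2 * (deriv ^^ 2) (S0inf \<beta>) \<tau>)"
proof -
  have b: "\<beta> = 1 \<or> \<beta> = 4" using assms(1) by auto
  consider (c1) "\<beta> = 1" "\<tau> < 1" | (c2) "\<beta> = 1" "\<tau> > 1" | (c3) "\<beta> = 4" "\<tau> < 1"
    | (c4) "\<beta> = 4" "1 < \<tau>" "\<tau> < 2" | (c5) "\<beta> = 4" "\<tau> > 2"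
  proof -
    have "\<tau> < 1 \<or> \<tau> > 1" using assms(3) by linarith
    moreover have "\<beta> = 4 \<Longrightarrow> \<tau> < 2 \<or> \<tau> > 2" using assms(4) by linarith
    ultimately show ?thesis using b that by blast
  qed
  then show ?thesis
  proof cases
    case c1
    have U: "\<tau> \<in> {0<..<1}" using c1 assms(2) by auto
    show ?thesis unfolding c1(1)
      by (rule case_final[OF open_greaterThanLessThan U _ ev1 I_case1[OF U]]) auto
  next
    case c2
    have U: "\<tau> \<in> {(1::real)<..}" using c2 by auto
    show ?thesis unfolding c2(1)
      by (rule case_final[OF open_greaterThan U _ ev2 I_case2[OF U]]) auto
  next
    case c3
    have U: "\<tau> \<in> {0<..<1}" using c3 assms(2) by auto
    show ?thesis unfolding c3(1)
      by (rule case_final[OF open_greaterThanLessThan U _ ev3 I_case3[OF U]]) auto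
  next
    case c4
    have U: "\<tau> \<in> {1<..<2}" using c4 by auto
    show ?thesis unfolding c4(1)
      by (rule case_final[OF open_greaterThanLessThan U _ ev4 I_case4[OF U]]) auto
  next
    case c5
    have U: "\<tau> \<in> {(2::real)<..}" using c5 by auto
    show ?thesis unfolding c5(1)
      by (rule case_final[OF open_greaterThan U _ ev5 I_case5[OF U]]) auto
  qed
qed


end
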